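(* Let $(\mathcal X,d)$ be a metric space, $f:[n]\to\mathcal X$ a feature and $1\le k\le n$. Let $\mathcal R_{k,n}$ be the distribution of a multiset $S=\{i_1,\dots,i_k\}$ obtained by drawing $i_1,\dots,i_k$ independently and uniformly from $[n]$ (sampling with replacement). Then $$\mathbb E_{S\sim\mathcal U_{k,n}}\big[W(\phi_f^{[n]},\phi_f^S)\big]\le\mathbb E_{S\sim\mathcal R_{k,n}}\big[W(\phi_f^{[n]},\phi_f^S)\big].$$
   Context: For a nonempty set or multiset $S$ of elements of $[n]$, $\phi_f^S=\frac1{|S|}\sum_{i\in S}\delta(f(i))$ (counted with multiplicity), where $\delta(\cdot)$ is a Dirac mass. For finitely supported distributions $\phi,\psi$ on $\mathcal X$, $W(\phi,\psi)=\min_{\gamma}\mathbb E_{(x,y)\sim\gamma}[d(x,y)]$, minimum over couplings $\gamma$ of $\phi,\psi$ (Wasserstein-1 distance). $\mathcal U_{k,n}$ is the uniform distribution over size-$k$ subsets of $[n]$ (sampling without replacement). *)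

theory Defs
  imports "HOL-Probability.Probability" "HOL-Probability.Product_PMF"
begin

definition emp_dist :: "(nat \<Rightarrow> 'a) \<Rightarrow> nat multiset \<Rightarrow> 'a pmf" where
  "emp_dist f S = map_pmf f (pmf_of_multiset S)"

definition wasserstein1 :: "'a::metric_space pmf \<Rightarrow> 'a pmf \<Rightarrow> real" where
  "wasserstein1 p q = Inf {measure_pmf.expectation \<gamma> (\<lambda>(x, y). dist x y) | \<gamma>.
      map_pmf fst \<gamma> = p \<and> map_pmf snd \<gamma> = q}"

definition unif_subsets :: "nat \<Rightarrow> nat \<Rightarrow> nat set pmf" where
  "unif_subsets k n = pmf_of_set {S. S \<subseteq> {1..n} \<and> card S = k}"

definition repl_multisets :: "nat \<Rightarrow> nat \<Rightarrow> nat multiset pmf" where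
  "repl_multisets k n = map_pmf (\<lambda>g. image_mset g (mset_set {0..<k}))
      (Pi_pmf {0..<k} 0 (\<lambda>_. pmf_of_set {1..n}))"

end

theory Submission
  imports Defs "HOL-Combinatorics.Permutations"
begin

lemma W_set_nonempty: "{measure_pmf.expectation \<gamma> (\<lambda>(x, y). dist x y) | \<gamma>.
      map_pmf fst \<gamma> = p \<and> map_pmf snd \<gamma> = q} \<noteq> {}"
  by (auto intro!: exI[of _ "pair_pmf p q"] simp: map_fst_pair_pmf map_snd_pair_pmf)

lemma W_set_bdd: "bdd_below {measure_pmf.expectation \<gamma> (\<lambda>(x, y). dist x y :: real) | \<gamma>.
      map_pmf fst \<gamma> = p \<and> map_pmf snd \<gamma> = q}"
  by (rule bdd_belowI[of _ 0]) (auto intro!: integral_nonneg_AE simp: case_prod_beta)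

lemma W_le: "map_pmf fst \<gamma> = p \<Longrightarrow> map_pmf snd \<gamma> = q \<Longrightarrow>
   wasserstein1 p q \<le> measure_pmf.expectation \<gamma> (\<lambda>(x, y). dist x y)"
  unfolding wasserstein1_def by (rule cInf_lower[OF _ W_set_bdd]) auto

lemma W_approx: assumes "e > 0"
  shows "\<exists>\<gamma>. map_pmf fst \<gamma> = p \<and> map_pmf snd \<gamma> = q \<and>
     measure_pmf.expectation \<gamma> (\<lambda>(x, y). dist x y) < wasserstein1 p q + e"
proof -
  have "wasserstein1 p q < wasserstein1 p q + e" using assms by simp
  then show ?thesis unfolding wasserstein1_def
    by (subst (asm) cInf_less_iff[OF W_set_nonempty W_set_bdd]) auto
qed

lemma coupling_finite:
  assumes "map_pmf fst \<gamma> = p" "map_pmf snd \<gamma> = q" "finite (set_pmf p)" "finite (set_pmf q)"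
  shows "finite (set_pmf \<gamma>)"
proof -
  have "set_pmf \<gamma> \<subseteq> set_pmf p \<times> set_pmf q"
  proof
    fix z assume "z \<in> set_pmf \<gamma>"
    then have "fst z \<in> set_pmf (map_pmf fst \<gamma>)" "snd z \<in> set_pmf (map_pmf snd \<gamma>)" by auto
    then show "z \<in> set_pmf p \<times> set_pmf q" using assms by (cases z) auto
  qed
  then show ?thesis using assms(3,4) finite_subset by blast
qed

lemma W_convex:
  fixes P :: "'a::metric_space pmf"
  assumes A: "finite A" "A \<noteq> {}" and fP: "finite (set_pmf P)"
    and fM: "\<And>a. a \<in> A \<Longrightarrow> finite (set_pmf (M a))"
  shows "wasserstein1 P (pmf_of_set A \<bind> M) \<le> (\<Sum>a\<in>A. wasserstein1 P (M a)) / card A"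
proof (rule field_le_epsilon)
  fix e :: real assume e: "e > 0"
  have "\<forall>a\<in>A. \<exists>\<gamma>. map_pmf fst \<gamma> = P \<and> map_pmf snd \<gamma> = M a \<and>
     measure_pmf.expectation \<gamma> (\<lambda>(x, y). dist x y) < wasserstein1 P (M a) + e"
    using W_approx[OF e] by blast
  then obtain \<gamma> where g: "\<And>a. a \<in> A \<Longrightarrow> map_pmf fst (\<gamma> a) = P \<and> map_pmf snd (\<gamma> a) = M a \<and>
     measure_pmf.expectation (\<gamma> a) (\<lambda>(x, y). dist x y) < wasserstein1 P (M a) + e"
    by metis
  define G where "G = pmf_of_set A \<bind> \<gamma>"
  have "map_pmf fst G = pmf_of_set A \<bind> (\<lambda>a. P)"
    unfolding G_def map_bind_pmf using A g by (intro bind_pmf_cong) auto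
  then have 1: "map_pmf fst G = P" by (simp add: bind_pmf_const)
  have 2: "map_pmf snd G = pmf_of_set A \<bind> M"
    unfolding G_def map_bind_pmf using A g by (intro bind_pmf_cong) auto
  have fg: "\<And>a. a \<in> A \<Longrightarrow> finite (set_pmf (\<gamma> a))"
    using g fM fP coupling_finite by blast
  have "wasserstein1 P (pmf_of_set A \<bind> M) \<le> measure_pmf.expectation G (\<lambda>(x, y). dist x y)"
    using W_le[OF 1 2] .
  also have "\<dots> = (\<Sum>a\<in>A. measure_pmf.expectation (\<gamma> a) (\<lambda>(x, y). dist x y) / card A)"
    unfolding G_def using A fg by (subst pmf_expectation_bind_pmf_of_set) (auto simp: divide_inverse_commute)
  also have "\<dots> \<le> (\<Sum>a\<in>A. (wasserstein1 P (M a) + e) / card A)"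
    using g A by (intro sum_mono divide_right_mono) (auto intro: less_imp_le)
  also have "\<dots> = (\<Sum>a\<in>A. wasserstein1 P (M a)) / card A + e"
    using A by (simp add: sum_divide_distrib[symmetric] sum.distrib add_divide_distrib card_gt_0_iff)
  finally show "wasserstein1 P (pmf_of_set A \<bind> M) \<le> (\<Sum>a\<in>A. wasserstein1 P (M a)) / card A + e" .
qed


lemma perm_exists:
  assumes "finite S" "A \<subseteq> S" "B \<subseteq> S" "card A = card B"
  shows "\<exists>\<pi>. \<pi> permutes S \<and> \<pi> ` A = B"
proof -
  have fA: "finite A" "finite B" using assms finite_subset by auto
  obtain g where g: "bij_betw g A B" using finite_same_card_bij[OF fA assms(4)] by blast
  have "card (S - A) = card (S - B)"
    using assms fA by (simp add: card_Diff_subset)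
  then obtain h where h: "bij_betw h (S - A) (S - B)"
    using finite_same_card_bij assms(1) by (metis finite_Diff)
  define u where "u x = (if x \<in> A then g x else h x)" for x
  have ug: "\<And>x. x \<in> A \<Longrightarrow> u x = g x" and uh: "\<And>x. x \<in> S - A \<Longrightarrow> u x = h x"
    by (auto simp: u_def)
  have "bij_betw u A B" using g bij_betw_cong[of A u g B] ug by blast
  moreover have "bij_betw u (S - A) (S - B)"
    using h bij_betw_cong[of "S - A" u h "S - B"] uh by blast
  ultimately have "bij_betw u (A \<union> (S - A)) (B \<union> (S - B))"
    by (rule bij_betw_combine) blast
  moreover have "A \<union> (S - A) = S" "B \<union> (S - B) = S" using assms by blast+
  ultimately have "bij_betw u S S" by simp
  then have "restrict_id u S permutes S" by (rule permutes_restrict_id)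
  moreover have "restrict_id u S ` A = u ` A"
    using assms(2) unfolding restrict_id_def by (intro image_cong) auto
  moreover have "u ` A = g ` A" using ug by (rule image_cong[OF refl])
  moreover have "g ` A = B" using g by (simp add: bij_betw_def)
  ultimately show ?thesis by metis
qed

lemma perm_exists_le:
  assumes "finite S" "A \<subseteq> S" "B \<subseteq> S" "card A \<le> card B"
  shows "\<exists>\<pi>. \<pi> permutes S \<and> \<pi> ` A \<subseteq> B"
proof -
  obtain B' where B': "B' \<subseteq> B" "card B' = card A" using obtain_subset_with_card_n[OF assms(4)] by metis
  have "B' \<subseteq> S" using B' assms by auto
  then obtain \<pi> where "\<pi> permutes S" "\<pi> ` A = B'" using perm_exists[of S A B'] assms B' by auto
  then show ?thesis using B' by blast
qed

lemma sum_perm_reindex: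
  assumes "\<tau> permutes S"
  shows "(\<Sum>\<sigma>\<in>{\<sigma>. \<sigma> permutes S}. h (\<sigma> \<circ> \<tau>)) = (\<Sum>\<sigma>\<in>{\<sigma>. \<sigma> permutes S}. h \<sigma>)"
proof -
  have "bij_betw (\<lambda>\<sigma>. \<sigma> \<circ> \<tau>) {\<sigma>. \<sigma> permutes S} {\<sigma>. \<sigma> permutes S}"
    by (rule bij_betw_byWitness[where f' = "\<lambda>\<sigma>. \<sigma> \<circ> inv \<tau>"])
       (auto simp: o_assoc[symmetric] permutes_inv_o[OF assms] permutes_compose permutes_inv assms)
  then show ?thesis by (rule sum.reindex_bij_betw)
qed

lemma perm_eval_uniform:
  assumes S: "finite S" and y: "y \<in> S"
  shows "map_pmf (\<lambda>\<tau>. \<tau> y) (pmf_of_set {\<tau>. \<tau> permutes S}) = pmf_of_set S"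
proof -
  define U where "U = pmf_of_set {\<tau>. \<tau> permutes S}"
  define R where "R = map_pmf (\<lambda>\<tau>. \<tau> y) U"
  have Pne: "{\<tau>. \<tau> permutes S} \<noteq> {}" using permutes_id by blast
  have Pfin: "finite {\<tau>. \<tau> permutes S}" using finite_permutations[OF S] .
  have setU: "set_pmf U = {\<tau>. \<tau> permutes S}" unfolding U_def using Pne Pfin by simp
  have setR: "set_pmf R \<subseteq> S" unfolding R_def using setU y by (auto simp: permutes_in_image)
  have inv: "map_pmf \<rho> R = R" if "\<rho> permutes S" for \<rho>
  proof -
    have "bij_betw (\<lambda>\<tau>. \<rho> \<circ> \<tau>) {\<tau>. \<tau> permutes S} {\<tau>. \<tau> permutes S}"
      by (rule bij_betw_byWitness[where f' = "\<lambda>\<tau>. inv \<rho> \<circ> \<tau>"])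
         (auto simp: o_assoc permutes_inv_o[OF that] permutes_compose permutes_inv that)
    then have "map_pmf (\<lambda>\<tau>. \<rho> \<circ> \<tau>) U = U" unfolding U_def
      using map_pmf_of_set_bij_betw Pne Pfin by blast
    have "map_pmf \<rho> R = map_pmf (\<lambda>\<tau>. \<tau> y) (map_pmf (\<lambda>\<tau>. \<rho> \<circ> \<tau>) U)"
      unfolding R_def map_pmf_comp by (simp add: o_def)
    then show ?thesis using \<open>map_pmf (\<lambda>\<tau>. \<rho> \<circ> \<tau>) U = U\<close> unfolding R_def by simp
  qed
  have const: "pmf R z = pmf R y" if "z \<in> S" for z
  proof -
    have "pmf R z = pmf (map_pmf (Transposition.transpose z y) R) z"
      using inv[OF permutes_swap_id[OF that y]] by simp
    also have "\<dots> = measure_pmf.prob R (Transposition.transpose z y -` {z})" by (simp add: pmf_map)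
    also have "Transposition.transpose z y -` {z} = {y}" by (auto simp: transpose_eq_iff)
    finally show ?thesis by (simp add: measure_pmf_single)
  qed
  have "sum (pmf R) S = 1" using sum_pmf_eq_1[OF S setR] .
  then have "card S * pmf R y = 1" using const by simp
  moreover have "card S > 0" using S y card_gt_0_iff by blast
  ultimately have py: "pmf R y = 1 / card S" by (simp add: field_simps mult.commute)
  show ?thesis unfolding R_def[symmetric] U_def[symmetric]
  proof (rule pmf_eqI)
    fix z show "pmf R z = pmf (pmf_of_set S) z"
    proof (cases "z \<in> S")
      case True
      have "S \<noteq> {}" using y by auto
      then show ?thesis using True py const S by (simp add: pmf_of_set)
    next
      case False
      have "S \<noteq> {}" using y by auto
      moreover have "pmf R z = 0" using False setR by (meson pmf_eq_0_set_pmf subsetD)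
      ultimately show ?thesis using False S by (simp add: pmf_of_set)
    qed
  qed
qed


lemma emp_dist_image:
  assumes "finite A" "A \<noteq> {}"
  shows "emp_dist f (image_mset g (mset_set A)) = map_pmf (f \<circ> g) (pmf_of_set A)"
  unfolding emp_dist_def using assms by (simp add: map_pmf_of_set[symmetric] map_pmf_comp o_def)

lemma emp_dist_set:
  assumes "finite A" "A \<noteq> {}"
  shows "emp_dist f (mset_set A) = map_pmf f (pmf_of_set A)"
  using emp_dist_image[OF assms, of f id] by simp

lemma mix_id:
  assumes k: "1 \<le> k" and w: "\<And>x. x \<in> {0..<k} \<Longrightarrow> w x \<in> {1..k}"
  shows "pmf_of_set {\<tau>. \<tau> permutes {1..k}} \<bind> (\<lambda>\<tau>. map_pmf (\<tau> \<circ> w) (pmf_of_set {0..<k::nat}))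
     = pmf_of_set {1..k::nat}"
proof -
  define Pk where "Pk = pmf_of_set {\<tau>. \<tau> permutes {1..k::nat}}"
  define U0 where "U0 = pmf_of_set {0..<k::nat}"
  have "Pk \<bind> (\<lambda>\<tau>. map_pmf (\<tau> \<circ> w) U0) = Pk \<bind> (\<lambda>\<tau>. U0 \<bind> (\<lambda>x. return_pmf (\<tau> (w x))))"
    by (simp add: map_pmf_def)
  also have "\<dots> = U0 \<bind> (\<lambda>x. Pk \<bind> (\<lambda>\<tau>. return_pmf (\<tau> (w x))))"
    by (rule bind_commute_pmf)
  also have "\<dots> = U0 \<bind> (\<lambda>x. pmf_of_set {1..k})"
  proof (rule bind_pmf_cong[OF refl])
    fix x assume "x \<in> set_pmf U0"
    then have "x \<in> {0..<k}" unfolding U0_def using k by auto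
    then have "w x \<in> {1..k}" by (rule w)
    then have "map_pmf (\<lambda>\<tau>. \<tau> (w x)) Pk = pmf_of_set {1..k}"
      unfolding Pk_def by (intro perm_eval_uniform) auto
    then show "Pk \<bind> (\<lambda>\<tau>. return_pmf (\<tau> (w x))) = pmf_of_set {1..k}"
      by (simp add: map_pmf_def)
  qed
  also have "\<dots> = pmf_of_set {1..k}" by (simp add: bind_pmf_const)
  finally show ?thesis unfolding Pk_def U0_def .
qed

lemma core:
  fixes P :: "'a::metric_space pmf"
  assumes fP: "finite (set_pmf P)" and k: "1 \<le> k" "k \<le> n"
    and w: "\<And>x. x \<in> {0..<k} \<Longrightarrow> w x \<in> {1..k}" and \<sigma>: "\<sigma> permutes {1..n::nat}"
  shows "wasserstein1 P (emp_dist f (mset_set (\<sigma> ` {1..k})))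
    \<le> (\<Sum>\<tau>\<in>{\<tau>. \<tau> permutes {1..k}}.
         wasserstein1 P (emp_dist f (image_mset (\<sigma> \<circ> \<tau> \<circ> w) (mset_set {0..<k})))) / fact k"
proof -
  define Pk where "Pk = {\<tau>. \<tau> permutes {1..k::nat}}"
  have Pkfin: "finite Pk" unfolding Pk_def by (rule finite_permutations) simp
  have Pkne: "Pk \<noteq> {}" unfolding Pk_def using permutes_id by blast
  have cPk: "card Pk = fact k" unfolding Pk_def by (rule card_permutations) auto
  have "mset_set (\<sigma> ` {1..k}) = image_mset \<sigma> (mset_set {1..k})"
    using \<sigma> by (simp add: image_mset_mset_set permutes_inj_on)
  then have "emp_dist f (mset_set (\<sigma> ` {1..k})) = map_pmf (f \<circ> \<sigma>) (pmf_of_set {1..k})"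
    using k by (simp add: emp_dist_image)
  also have "\<dots> = map_pmf (f \<circ> \<sigma>) (pmf_of_set Pk \<bind> (\<lambda>\<tau>. map_pmf (\<tau> \<circ> w) (pmf_of_set {0..<k})))"
    unfolding Pk_def using mix_id[OF k(1) w] by simp
  also have "\<dots> = pmf_of_set Pk \<bind> (\<lambda>\<tau>. emp_dist f (image_mset (\<sigma> \<circ> \<tau> \<circ> w) (mset_set {0..<k})))"
    unfolding map_bind_pmf using k by (simp add: emp_dist_image map_pmf_comp o_def)
  finally have eq: "emp_dist f (mset_set (\<sigma> ` {1..k})) =
     pmf_of_set Pk \<bind> (\<lambda>\<tau>. emp_dist f (image_mset (\<sigma> \<circ> \<tau> \<circ> w) (mset_set {0..<k})))" .
  have "wasserstein1 P (pmf_of_set Pk \<bind> (\<lambda>\<tau>. emp_dist f (image_mset (\<sigma> \<circ> \<tau> \<circ> w) (mset_set {0..<k}))))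
     \<le> (\<Sum>\<tau>\<in>Pk. wasserstein1 P (emp_dist f (image_mset (\<sigma> \<circ> \<tau> \<circ> w) (mset_set {0..<k})))) / card Pk"
    by (rule W_convex[OF Pkfin Pkne fP]) (use k in \<open>simp add: emp_dist_image\<close>)
  moreover have "real (card Pk) = fact k" using cPk by simp
  ultimately show ?thesis unfolding eq Pk_def[symmetric] by simp
qed

theorem lemma2p3:
  fixes f :: "nat \<Rightarrow> 'a::metric_space" and n k :: nat
  assumes "1 \<le> k" and "k \<le> n"
  shows "measure_pmf.expectation (unif_subsets k n)
           (\<lambda>S. wasserstein1 (emp_dist f (mset_set {1..n})) (emp_dist f (mset_set S)))
         \<le> measure_pmf.expectation (repl_multisets k n)
           (\<lambda>S. wasserstein1 (emp_dist f (mset_set {1..n})) (emp_dist f S))"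
proof -
  note k = assms
  define P where "P = emp_dist f (mset_set {1..n})"
  define F where "F M = wasserstein1 P (emp_dist f M)" for M
  define H where "H v = image_mset v (mset_set {0..<k})" for v :: "nat \<Rightarrow> nat"
  define Pn where "Pn = {\<sigma>. \<sigma> permutes {1..n}}"
  define K where "K = {S. S \<subseteq> {1..n} \<and> card S = k}"
  define V where "V = PiE_dflt {0..<k} 0 (\<lambda>_. {1..n})"
  define A0 where "A0 = (\<Sum>\<sigma>\<in>Pn. F (mset_set (\<sigma> ` {1..k})))"
  have fP: "finite (set_pmf P)" unfolding P_def using k by (simp add: emp_dist_set)
  have Pnfin: "finite Pn" unfolding Pn_def by (rule finite_permutations) simp
  have cPn: "card Pn = fact n" unfolding Pn_def by (rule card_permutations) auto
  have Kfin: "finite K" unfolding K_def by (rule finite_subset[of _ "Pow {1..n}"]) auto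
  have Kne: "{1..k} \<in> K" unfolding K_def using k by auto
  have Vfin: "finite V" unfolding V_def by (rule finite_PiE_dflt) auto
  have n1: "1 \<le> n" using k by simp
  have Vne: "(\<lambda>x. if x \<in> {0..<k} then 1 else 0) \<in> V" unfolding V_def PiE_dflt_def using n1 by auto
  have LHS: "measure_pmf.expectation (unif_subsets k n) (\<lambda>S. F (mset_set S)) = (\<Sum>T\<in>K. F (mset_set T)) / card K"
    unfolding unif_subsets_def K_def[symmetric] using Kfin Kne by (subst integral_pmf_of_set) auto
  have "repl_multisets k n = map_pmf H (pmf_of_set V)"
    unfolding repl_multisets_def V_def H_def using n1 by (subst Pi_pmf_of_set) auto
  have RHS: "measure_pmf.expectation (repl_multisets k n) F = (\<Sum>v\<in>V. F (H v)) / card V"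
  proof -
    have "V \<noteq> {}" using Vne by blast
    then show ?thesis using Vfin \<open>repl_multisets k n = map_pmf H (pmf_of_set V)\<close>
      by (simp add: integral_pmf_of_set)
  qed
  have L1: "(\<Sum>T\<in>K. F (mset_set (\<sigma> ` T))) = (\<Sum>T\<in>K. F (mset_set T))" if \<sigma>: "\<sigma> \<in> Pn" for \<sigma>
  proof -
    have sp: "\<sigma> permutes {1..n}" using \<sigma> unfolding Pn_def by simp
    have "bij_betw (image \<sigma>) K K"
    proof (rule bij_betw_byWitness[where f' = "image (inv \<sigma>)"])
      show "\<forall>a\<in>K. inv \<sigma> ` \<sigma> ` a = a"
        using sp by (simp add: image_comp permutes_inv_o(2))
      show "\<forall>a\<in>K. \<sigma> ` inv \<sigma> ` a = a"
        using sp by (simp add: image_comp permutes_inv_o(1))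
      show "image \<sigma> ` K \<subseteq> K"
      proof
        fix X assume "X \<in> image \<sigma> ` K"
        then obtain T where T: "T \<in> K" "X = \<sigma> ` T" by auto
        have "\<sigma> ` T \<subseteq> {1..n}" using T(1) sp unfolding K_def
          by (metis (mono_tags, lifting) image_mono mem_Collect_eq permutes_image)
        moreover have "card (\<sigma> ` T) = card T" using sp by (simp add: card_image permutes_inj_on)
        ultimately show "X \<in> K" using T unfolding K_def by auto
      qed
      show "image (inv \<sigma>) ` K \<subseteq> K"
      proof
        fix X assume "X \<in> image (inv \<sigma>) ` K"
        then obtain T where T: "T \<in> K" "X = inv \<sigma> ` T" by auto
        have spi: "inv \<sigma> permutes {1..n}" using sp by (rule permutes_inv)
        have "inv \<sigma> ` T \<subseteq> {1..n}" using T(1) spi unfolding K_def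
          by (metis (mono_tags, lifting) image_mono mem_Collect_eq permutes_image)
        moreover have "card (inv \<sigma> ` T) = card T" using spi by (simp add: card_image permutes_inj_on)
        ultimately show "X \<in> K" using T unfolding K_def by auto
      qed
    qed
    then show ?thesis by (rule sum.reindex_bij_betw)
  qed
  have L2: "(\<Sum>\<sigma>\<in>Pn. F (mset_set (\<sigma> ` T))) = A0" if T: "T \<in> K" for T
  proof -
    obtain \<pi> where \<pi>: "\<pi> permutes {1..n}" "\<pi> ` {1..k} = T"
      using perm_exists[of "{1..n}" "{1..k}" T] T k unfolding K_def by auto
    have "(\<Sum>\<sigma>\<in>Pn. F (mset_set (\<sigma> ` T))) = (\<Sum>\<sigma>\<in>Pn. F (mset_set ((\<sigma> \<circ> \<pi>) ` {1..k})))"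
      using \<pi>(2) by (metis image_comp)
    also have "\<dots> = A0" unfolding A0_def Pn_def
      by (rule sum_perm_reindex[OF \<pi>(1), where h = "\<lambda>\<sigma>. F (mset_set (\<sigma> ` {1..k}))"])
    finally show ?thesis .
  qed
  have "fact n * (\<Sum>T\<in>K. F (mset_set T)) = (\<Sum>\<sigma>\<in>Pn. \<Sum>T\<in>K. F (mset_set T))"
    using cPn by simp
  also have "\<dots> = (\<Sum>\<sigma>\<in>Pn. \<Sum>T\<in>K. F (mset_set (\<sigma> ` T)))" using L1 by simp
  also have "\<dots> = (\<Sum>T\<in>K. \<Sum>\<sigma>\<in>Pn. F (mset_set (\<sigma> ` T)))" by (rule sum.swap)
  also have "\<dots> = (\<Sum>T\<in>K. A0)" using L2 by simp
  finally have Lsum: "fact n * (\<Sum>T\<in>K. F (mset_set T)) = card K * A0" by simp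
  have R1: "(\<Sum>v\<in>V. F (H (\<sigma> \<circ> v))) = (\<Sum>v\<in>V. F (H v))" if \<sigma>: "\<sigma> \<in> Pn" for \<sigma>
  proof -
    have sp: "\<sigma> permutes {1..n}" using \<sigma> unfolding Pn_def by simp
    have spi: "inv \<sigma> permutes {1..n}" using sp by (rule permutes_inv)
    have memV: "p \<circ> v \<in> V" if "p permutes {1..n}" "v \<in> V" for p v
    proof -
      have vv: "\<forall>x. (x \<in> {0..<k} \<longrightarrow> v x \<in> {1..n}) \<and> (x \<notin> {0..<k} \<longrightarrow> v x = 0)"
        using that(2) unfolding V_def PiE_dflt_def by blast
      have "\<forall>x. (x \<in> {0..<k} \<longrightarrow> (p \<circ> v) x \<in> {1..n}) \<and> (x \<notin> {0..<k} \<longrightarrow> (p \<circ> v) x = 0)"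
      proof (intro allI conjI impI)
        fix x assume "x \<in> {0..<k}"
        then have "v x \<in> {1..n}" using vv by blast
        then show "(p \<circ> v) x \<in> {1..n}" using permutes_in_image[OF that(1)] by simp
      next
        fix x assume "x \<notin> {0..<k}"
        then have "v x = 0" using vv by blast
        moreover have "(0::nat) \<notin> {1..n}" by simp
        ultimately show "(p \<circ> v) x = 0" using permutes_not_in[OF that(1)] by simp
      qed
      then show ?thesis unfolding V_def PiE_dflt_def by blast
    qed
    have "bij_betw (\<lambda>v. \<sigma> \<circ> v) V V"
      by (rule bij_betw_byWitness[where f' = "\<lambda>v. inv \<sigma> \<circ> v"])
        (auto simp: o_assoc permutes_inv_o[OF sp] intro: memV[OF sp] memV[OF spi])
    then show ?thesis by (rule sum.reindex_bij_betw)
  qed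
  have R2: "A0 \<le> (\<Sum>\<sigma>\<in>Pn. F (H (\<sigma> \<circ> v)))" if v: "v \<in> V" for v
  proof -
    have D: "v ` {0..<k} \<subseteq> {1..n}" using v unfolding V_def PiE_dflt_def by auto
    have "card (v ` {0..<k}) \<le> card {1..k}" using card_image_le[of "{0..<k}" v] by simp
    then obtain \<pi> where \<pi>: "\<pi> permutes {1..n}" "\<pi> ` (v ` {0..<k}) \<subseteq> {1..k}"
      using perm_exists_le[of "{1..n}" "v ` {0..<k}" "{1..k}"] D k by auto
    define w where "w = \<pi> \<circ> v"
    have w: "w x \<in> {1..k}" if "x \<in> {0..<k}" for x using \<pi>(2) that unfolding w_def by (metis comp_apply image_eqI subsetD)
    have "(\<Sum>\<sigma>\<in>Pn. F (H (\<sigma> \<circ> w))) = (\<Sum>\<sigma>\<in>Pn. F (H ((\<sigma> \<circ> inv \<pi>) \<circ> w)))"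
      unfolding Pn_def by (rule sum_perm_reindex[OF permutes_inv[OF \<pi>(1)], symmetric])
    also have "\<dots> = (\<Sum>\<sigma>\<in>Pn. F (H (\<sigma> \<circ> v)))"
    proof -
      have "inv \<pi> \<circ> (\<pi> \<circ> v) = v" by (simp add: o_assoc permutes_inv_o[OF \<pi>(1)])
      then show ?thesis unfolding w_def by (simp add: o_assoc[symmetric])
    qed
    finally have eqw: "(\<Sum>\<sigma>\<in>Pn. F (H (\<sigma> \<circ> w))) = (\<Sum>\<sigma>\<in>Pn. F (H (\<sigma> \<circ> v)))" .
    define Pk where "Pk = {\<tau>. \<tau> permutes {1..k::nat}}"
    have cPk: "card Pk = fact k" unfolding Pk_def by (rule card_permutations) auto
    have "A0 \<le> (\<Sum>\<sigma>\<in>Pn. (\<Sum>\<tau>\<in>Pk. F (H (\<sigma> \<circ> \<tau> \<circ> w))) / fact k)"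
      unfolding A0_def F_def H_def Pk_def
      by (rule sum_mono, rule core[OF fP k w]) (auto simp: Pn_def)
    also have "\<dots> = (\<Sum>\<tau>\<in>Pk. \<Sum>\<sigma>\<in>Pn. F (H ((\<sigma> \<circ> \<tau>) \<circ> w))) / fact k"
      by (simp add: sum_divide_distrib[symmetric] o_assoc) (rule sum.swap)
    also have "\<dots> = (\<Sum>\<tau>\<in>Pk. \<Sum>\<sigma>\<in>Pn. F (H (\<sigma> \<circ> w))) / fact k"
    proof -
      have "(\<Sum>\<sigma>\<in>Pn. F (H ((\<sigma> \<circ> \<tau>) \<circ> w))) = (\<Sum>\<sigma>\<in>Pn. F (H (\<sigma> \<circ> w)))" if "\<tau> \<in> Pk" for \<tau>
      proof -
        have "\<tau> permutes {1..n}" using that k unfolding Pk_def by (auto intro: permutes_subset)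
        then show ?thesis unfolding Pn_def by (rule sum_perm_reindex)
      qed
      then show ?thesis by simp
    qed
    also have "\<dots> = (\<Sum>\<sigma>\<in>Pn. F (H (\<sigma> \<circ> w)))" using cPk by simp
    finally show ?thesis using eqw by simp
  qed
  have "card V * A0 = (\<Sum>v\<in>V. A0)" by simp
  also have "\<dots> \<le> (\<Sum>v\<in>V. \<Sum>\<sigma>\<in>Pn. F (H (\<sigma> \<circ> v)))" using R2 by (rule sum_mono)
  also have "\<dots> = (\<Sum>\<sigma>\<in>Pn. \<Sum>v\<in>V. F (H (\<sigma> \<circ> v)))" by (rule sum.swap)
  also have "\<dots> = (\<Sum>\<sigma>\<in>Pn. \<Sum>v\<in>V. F (H v))" using R1 by simp
  also have "\<dots> = fact n * (\<Sum>v\<in>V. F (H v))" using cPn by simp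
  finally have Rsum: "card V * A0 \<le> fact n * (\<Sum>v\<in>V. F (H v))" .
  have cK: "card K > 0" using Kfin Kne card_gt_0_iff by blast
  have cV: "card V > 0" using Vfin Vne card_gt_0_iff by blast
  have "(\<Sum>T\<in>K. F (mset_set T)) / card K = A0 / fact n"
    using Lsum cK by (simp add: field_simps)
  also have "\<dots> \<le> (\<Sum>v\<in>V. F (H v)) / card V"
    using Rsum cV by (simp add: field_simps)
  finally have "measure_pmf.expectation (unif_subsets k n) (\<lambda>S. F (mset_set S))
     \<le> measure_pmf.expectation (repl_multisets k n) F" using LHS RHS by simp
  then show ?thesis unfolding F_def P_def .
qed

end
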